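(* Let $\mathcal{G}$ be a simple temporal clique and let $\mathcal{T}^+=(V,E^+_T)$ be obtained by the backward construction. For every vertex $v$ that is not a collector, there exists a vertex $v'$ in the same out-tree of $\mathcal{T}^+$ as $v$ (collector or not) and a journey of length at most two from $v'$ to $v$ whose first edge is $e^+(v')$.
   Context: A simple temporal clique is a pair $\mathcal{G}=(G,\lambda)$ where $G=(V,E)$ is the complete graph on a finite vertex set $V$ and $\lambda:E\to\mathbb{N}$ assigns to each edge a single integer label such that any two distinct edges sharing an endpoint have different labels; the label of an arc $(x,y)$ is $\lambda(\{x,y\})$. A journey from $x$ to $y$ is a sequence of vertices $x=u_0,\dots,u_k=y$ ($k\ge1$) with $\lambda(\{u_{i-1},u_i\})<\lambda(\{u_i,u_{i+1}\})$ for $1\le i<k$; its length is $k$ and its first edge is $\{u_0,u_1\}$. For a vertex $v$, $e^+(v)$ is the edge incident to $v$ with largest label. Backward construction: let $E^+$ be the set of arcs $(v,u)$ with $\{u,v\}=e^+(v)$, except that if $e^+(u)=e^+(v)=\{u,v\}$ only one of the two arcs $(u,v),(v,u)$ is included (arbitrarily). Initialize $E^+_T:=E^+$. For every vertex $v$ of in-degree at least $2$ in $(V,E^+)$, let $(u_1,v),\dots,(u_\ell,v)$ be its in-arcs in $E^+$, where $(u_\ell,v)$ has the smallest label; for each $i<\ell$, if $u_i$ has in-degree $0$ in $(V,E^+)$, replace $(u_i,v)$ by $(v,u_i)$ in $E^+_T$, and otherwise remove $(u_i,v)$ from $E^+_T$. Set $\mathcal{T}^+=(V,E^+_T)$. Its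 weakly connected components are called out-trees; a collector is a vertex of in-degree $0$ in $\mathcal{T}^+$. *)

theory Defs
  imports Main
begin

definition simple_temporal_clique :: "'a set \<Rightarrow> ('a \<Rightarrow> 'a \<Rightarrow> nat) \<Rightarrow> bool" where
  "simple_temporal_clique V lam \<longleftrightarrow> finite V \<and>
     (\<forall>x\<in>V. \<forall>y\<in>V. x \<noteq> y \<longrightarrow> lam x y = lam y x) \<and>
     (\<forall>x\<in>V. \<forall>y\<in>V. \<forall>z\<in>V. x \<noteq> y \<and> x \<noteq> z \<and> y \<noteq> z \<longrightarrow> lam x y \<noteq> lam x z)"

(* e^+(v) = {v, eplus V lam v}: the other endpoint of the max-label edge at v *)
definition eplus :: "'a set \<Rightarrow> ('a \<Rightarrow> 'a \<Rightarrow> nat) \<Rightarrow> 'a \<Rightarrow> 'a" where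
  "eplus V lam v = (THE u. u \<in> V \<and> u \<noteq> v \<and> (\<forall>w\<in>V. w \<noteq> v \<and> w \<noteq> u \<longrightarrow> lam v w < lam v u))"

(* A is a valid choice of E^+: arcs (v, eplus v), with exactly one of the two arcs
   kept (arbitrarily) when e^+(u) = e^+(v) = {u,v}. *)
definition is_Eplus :: "'a set \<Rightarrow> ('a \<Rightarrow> 'a \<Rightarrow> nat) \<Rightarrow> ('a \<times> 'a) set \<Rightarrow> bool" where
  "is_Eplus V lam A \<longleftrightarrow>
     A \<subseteq> {(v, eplus V lam v) | v. v \<in> V} \<and>
     (\<forall>v\<in>V. (v, eplus V lam v) \<in> A \<or>
              (eplus V lam (eplus V lam v) = v \<and> (eplus V lam v, v) \<in> A)) \<and>
     (\<forall>v\<in>V. eplus V lam (eplus V lam v) = v \<longrightarrow>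
              \<not> ((v, eplus V lam v) \<in> A \<and> (eplus V lam v, v) \<in> A))"

definition indeg :: "('a \<times> 'a) set \<Rightarrow> 'a \<Rightarrow> nat" where
  "indeg A v = card {u. (u, v) \<in> A}"

definition min_in_arc :: "('a \<Rightarrow> 'a \<Rightarrow> nat) \<Rightarrow> ('a \<times> 'a) set \<Rightarrow> 'a \<Rightarrow> 'a \<Rightarrow> bool" where
  "min_in_arc lam A u v \<longleftrightarrow> (u, v) \<in> A \<and> (\<forall>w. (w, v) \<in> A \<longrightarrow> lam u v \<le> lam w v)"

definition ET :: "('a \<Rightarrow> 'a \<Rightarrow> nat) \<Rightarrow> ('a \<times> 'a) set \<Rightarrow> ('a \<times> 'a) set" where
  "ET lam A =
     {(u, v). (u, v) \<in> A \<and> (indeg A v < 2 \<or> min_in_arc lam A u v)} \<union>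
     {(v, u). (u, v) \<in> A \<and> indeg A v \<ge> 2 \<and> \<not> min_in_arc lam A u v \<and> indeg A u = 0}"

definition collector :: "('a \<times> 'a) set \<Rightarrow> 'a \<Rightarrow> bool" where
  "collector T v \<longleftrightarrow> indeg T v = 0"

(* same weakly connected component (out-tree) of (V, T) *)
definition same_out_tree :: "('a \<times> 'a) set \<Rightarrow> 'a \<Rightarrow> 'a \<Rightarrow> bool" where
  "same_out_tree T x y \<longleftrightarrow> (x, y) \<in> (T \<union> T\<inverse>)\<^sup>*"

(* journey given as the vertex list u_0,...,u_k, k = length p - 1 >= 1 *)
definition journey :: "'a set \<Rightarrow> ('a \<Rightarrow> 'a \<Rightarrow> nat) \<Rightarrow> 'a list \<Rightarrow> bool" where
  "journey V lam p \<longleftrightarrow> length p \<ge> 2 \<and> set p \<subseteq> V \<and>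
     (\<forall>i. i + 1 < length p \<longrightarrow> p ! i \<noteq> p ! (i + 1)) \<and>
     (\<forall>i. i + 2 < length p \<longrightarrow> lam (p ! i) (p ! (i + 1)) < lam (p ! (i + 1)) (p ! (i + 2)))"

end

theory Submission
  imports Defs
begin

lemma journey2:
  assumes "u \<in> V" "v \<in> V" "u \<noteq> v"
  shows "journey V lam [u, v]"
  using assms unfolding journey_def
  by (auto simp: less_Suc_eq)

lemma journey3:
  assumes "u \<in> V" "v \<in> V" "w \<in> V" "u \<noteq> v" "v \<noteq> w" "lam u v < lam v w"
  shows "journey V lam [u, v, w]"
unfolding journey_def
proof (intro conjI allI impI)
  fix i :: nat assume "i + 1 < length [u, v, w]"
  then have "i = 0 \<or> i = 1" by auto
  then show "[u, v, w] ! i \<noteq> [u, v, w] ! (i + 1)" using assms by auto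
next
  fix i :: nat assume "i + 2 < length [u, v, w]"
  then have "i = 0" by auto
  then show "lam ([u, v, w] ! i) ([u, v, w] ! (i + 1)) < lam ([u, v, w] ! (i + 1)) ([u, v, w] ! (i + 2))" using assms by auto
qed (use assms in auto)

lemma eplus_ne:
  assumes "is_Eplus V lam A" "x \<in> V"
  shows "eplus V lam x \<noteq> x"
  using assms unfolding is_Eplus_def by metis

lemma eplus_in:
  assumes "simple_temporal_clique V lam" "x \<in> V" "z \<in> V" "z \<noteq> x"
  shows "eplus V lam x \<in> V"
proof -
  have fin: "finite V" using assms(1) unfolding simple_temporal_clique_def by blast
  let ?S = "V - {x}"
  have ne: "?S \<noteq> {}" using assms by blast
  have fS: "finite (lam x ` ?S)" using fin by blast
  obtain u where u: "u \<in> ?S" "lam x u = Max (lam x ` ?S)"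
  proof -
    have "Max (lam x ` ?S) \<in> lam x ` ?S" using Max_in[OF fS] ne by blast
    then show ?thesis using that by (metis imageE)
  qed
  have P: "u \<in> V \<and> u \<noteq> x \<and> (\<forall>w\<in>V. w \<noteq> x \<and> w \<noteq> u \<longrightarrow> lam x w < lam x u)"
  proof (intro conjI ballI impI)
    fix w assume w: "w \<in> V" "w \<noteq> x \<and> w \<noteq> u"
    have "lam x w \<in> lam x ` ?S" using w by blast
    then have "lam x w \<le> lam x u" using u(2) Max_ge[OF fS] by simp
    moreover have "lam x w \<noteq> lam x u"
    proof -
      have D: "\<forall>x\<in>V. \<forall>y\<in>V. \<forall>z\<in>V. x \<noteq> y \<and> x \<noteq> z \<and> y \<noteq> z \<longrightarrow> lam x y \<noteq> lam x z"
        using assms(1) unfolding simple_temporal_clique_def by simp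
      have "u \<in> V" "u \<noteq> x" using u(1) by auto
      then show ?thesis using D w assms(2) by metis
    qed
    ultimately show "lam x w < lam x u" by simp
  qed (use u in auto)
  have "\<And>u'. u' \<in> V \<and> u' \<noteq> x \<and> (\<forall>w\<in>V. w \<noteq> x \<and> w \<noteq> u' \<longrightarrow> lam x w < lam x u') \<Longrightarrow> u' = u"
  proof -
    fix u' assume H: "u' \<in> V \<and> u' \<noteq> x \<and> (\<forall>w\<in>V. w \<noteq> x \<and> w \<noteq> u' \<longrightarrow> lam x w < lam x u')"
    show "u' = u"
    proof (rule ccontr)
      assume "u' \<noteq> u"
      then have "lam x u < lam x u'" "lam x u' < lam x u" using H P by auto
      then show False by simp
    qed
  qed
  hence "eplus V lam x = u" unfolding eplus_def using P by (rule the_equality[rotated]) 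
  thus ?thesis using u by auto
qed

theorem lemma6:
  fixes V :: "'a set" and lam :: "'a \<Rightarrow> 'a \<Rightarrow> nat" and A :: "('a \<times> 'a) set"
  assumes "simple_temporal_clique V lam"
    and "is_Eplus V lam A"
    and "v \<in> V"
    and "\<not> collector (ET lam A) v"
  shows "\<exists>v' p. v' \<in> V \<and> same_out_tree (ET lam A) v' v \<and>
           journey V lam p \<and> hd p = v' \<and> last p = v \<and> length p - 1 \<le> 2 \<and>
           p ! 1 = eplus V lam v'"
proof -
  let ?f = "eplus V lam"
  have Asub: "\<And>a b. (a, b) \<in> A \<Longrightarrow> a \<in> V \<and> b = ?f a"
  proof -
    fix a b assume ab: "(a, b) \<in> A"
    have "A \<subseteq> {(v, eplus V lam v) | v. v \<in> V}" using assms(2) unfolding is_Eplus_def by simp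
    then show "a \<in> V \<and> b = ?f a" using ab by blast
  qed
  have "{u. (u, v) \<in> ET lam A} \<noteq> {}"
    using assms(4) unfolding collector_def indeg_def by force
  then obtain u where u: "(u, v) \<in> ET lam A" by blast
  show ?thesis
  proof (cases "(u, v) \<in> A \<and> (indeg A v < 2 \<or> min_in_arc lam A u v)")
    case True
    have uV: "u \<in> V" and vf: "v = ?f u" using Asub True by auto
    have "u \<noteq> v" using eplus_ne[OF assms(2) uV] vf by simp
    hence "journey V lam [u, v]" by (rule journey2[OF uV assms(3)])
    moreover have "same_out_tree (ET lam A) u v" unfolding same_out_tree_def using u by blast
    ultimately show ?thesis using uV vf
      by (intro exI[of _ u] exI[of _ "[u, v]"]) auto
  next
    case False
    then have c: "(v, u) \<in> A" "\<not> min_in_arc lam A v u"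
      using u unfolding ET_def by auto
    define y where "y = u"
    have yf: "y = ?f v" using Asub c y_def by auto
    obtain w' where w': "(w', y) \<in> A" "lam w' y < lam v y"
      using c unfolding min_in_arc_def y_def by (meson not_le)
    obtain w where w: "(w, y) \<in> A" "\<forall>z. (z, y) \<in> A \<longrightarrow> lam w y \<le> lam z y"
      using ex_has_least_nat[of "\<lambda>z. (z, y) \<in> A" w' "\<lambda>z. lam z y"] w'(1) by blast
    have wv: "w \<noteq> v" using w w' by (metis leD)
    have wV: "w \<in> V" and yw: "y = ?f w" using Asub w(1) by auto
    have yV: "y \<in> V" using eplus_in[OF assms(1) wV assms(3) wv[symmetric]] yw by simp
    have yv: "y \<noteq> v" using eplus_ne[OF assms(2) assms(3)] yf by simp
    have wy: "w \<noteq> y" using eplus_ne[OF assms(2) wV] yw by simp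
    have symm: "\<forall>x\<in>V. \<forall>y\<in>V. x \<noteq> y \<longrightarrow> lam x y = lam y x"
      using assms(1) unfolding simple_temporal_clique_def by simp
    have sym: "lam v y = lam y v" by (rule symm[rule_format, OF assms(3) yV yv[symmetric]])
    have lt: "lam w y < lam y v" using w w' sym by (metis le_less_trans)
    have j: "journey V lam [w, y, v]" using journey3[OF wV yV assms(3) wy yv lt] .
    have e1: "(w, y) \<in> ET lam A" using w unfolding ET_def min_in_arc_def by auto
    have "same_out_tree (ET lam A) w v" unfolding same_out_tree_def
      using e1 u y_def by (meson UnI1 converse_rtrancl_into_rtrancl r_into_rtrancl)
    then show ?thesis using j wV yw
      by (intro exI[of _ w] exI[of _ "[w, y, v]"]) auto
  qed
qed

end
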